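(* Let $Y\sim N(\theta,1)$ with $\theta\in\mathbb{R}$, let $a>0$ and $\nu_a=\mathbb{E}(Z^2\mid|Z|\ge a)$ for $Z\sim N(0,1)$. Let $A=(Y^2-\nu_a)\mathbb{1}(|Y|\ge a)$ and $B=Y^2-1$. Then the distribution of $A-B$ is stochastically decreasing in $|\theta|$, i.e. if $|\theta|\le|\theta'|$ then $\mathbb{P}_{\theta'}(A-B\le t)\ge\mathbb{P}_{\theta}(A-B\le t)$ for all $t\in\mathbb{R}$. *)

theory Defs
  imports "HOL-Probability.Probability"
begin

definition normal_law :: "real \<Rightarrow> real measure" where
  "normal_law \<theta> = density lborel (normal_density \<theta> 1)"

definition nu :: "real \<Rightarrow> real" where
  "nu a = (\<integral>z. indicator {z. a \<le> \<bar>z\<bar>} z * z\<^sup>2 \<partial>normal_law 0)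
          / measure (normal_law 0) {z. a \<le> \<bar>z\<bar>}"

definition A_stat :: "real \<Rightarrow> real \<Rightarrow> real" where
  "A_stat a y = (y\<^sup>2 - nu a) * indicator {z. a \<le> \<bar>z\<bar>} y"

definition B_stat :: "real \<Rightarrow> real" where
  "B_stat y = y\<^sup>2 - 1"

end

theory Submission imports Defs begin

definition Psi :: "real \<Rightarrow> real" where
  "Psi u = (LBINT y=0..u. std_normal_density y)"

lemma cont_phi: "continuous_on S std_normal_density"
  unfolding normal_density_def by (intro continuous_intros) auto

lemma Psi_deriv: "(Psi has_real_derivative std_normal_density x) (at x)"
proof -
  let ?a = "min 0 x - 1" and ?b = "max 0 x + 1"
  have "((\<lambda>u. LBINT y=0..u. std_normal_density y) has_vector_derivative std_normal_density x)
          (at x within {?a..?b})"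
    using interval_integral_FTC2[of "?a" 0 "?b" std_normal_density x] cont_phi
    by (simp flip: zero_ereal_def)
  then have "((\<lambda>u. LBINT y=0..u. std_normal_density y) has_vector_derivative std_normal_density x)
          (at x within {?a<..<?b})"
    by (rule has_vector_derivative_within_subset) auto
  then have "((\<lambda>u. LBINT y=0..u. std_normal_density y) has_vector_derivative std_normal_density x)
          (at x)"
    by (subst (asm) has_vector_derivative_within_open) auto
  then show ?thesis unfolding Psi_def[abs_def]
    by (simp add: has_real_derivative_iff_has_vector_derivative)
qed

lemma nd_shift: "normal_density \<theta> 1 y = std_normal_density (y - \<theta>)"
  by (simp add: normal_density_def)

lemma measure_law: "measure (normal_law \<theta>) A = (LINT x|lborel. normal_density \<theta> 1 x * indicator A x)"
  if "A \<in> sets borel"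
proof -
  have "measure (normal_law \<theta>) A = integral\<^sup>L (normal_law \<theta>) (indicator A)"
    by (simp add: integral_indicator normal_law_def)
  also have "\<dots> = (LINT x|lborel. normal_density \<theta> 1 x * indicator A x)"
    unfolding normal_law_def using that
    by (intro integral_real_density) auto
  finally show ?thesis .
qed

lemma measure_interval:
  assumes "l \<le> u"
  shows "measure (normal_law \<theta>) {l<..<u} = Psi (u - \<theta>) - Psi (l - \<theta>)"
proof -
  have "measure (normal_law \<theta>) {l<..<u} = (LINT x|lborel. normal_density \<theta> 1 x * indicator {l<..<u} x)"
    by (rule measure_law) auto
  also have "\<dots> = (LBINT x=l..u. normal_density \<theta> 1 x)"
    using assms by (simp add: interval_lebesgue_integral_def set_lebesgue_integral_def mult.commute)
  also have "\<dots> = Psi (u - \<theta>) - Psi (l - \<theta>)"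
  proof (rule interval_integral_FTC_finite)
    show "continuous_on {min l u..max l u} (normal_density \<theta> 1)"
      unfolding normal_density_def by (intro continuous_intros) auto
    fix x
    have "((\<lambda>x. Psi (x - \<theta>)) has_real_derivative std_normal_density (x - \<theta>) * 1) (at x)"
      by (rule DERIV_chain2[OF Psi_deriv]) (auto intro!: derivative_eq_intros)
    then show "((\<lambda>x. Psi (x - \<theta>)) has_vector_derivative normal_density \<theta> 1 x) (at x within {min l u..max l u})"
      unfolding nd_shift[of \<theta> x]
      by (simp add: has_real_derivative_iff_has_vector_derivative has_vector_derivative_at_within)
  qed
  finally show ?thesis .
qed

lemma prob_law: "prob_space (normal_law \<theta>)"
  unfolding normal_law_def by (rule prob_space_normal_density) simp

lemma space_law[simp]: "space (normal_law \<theta>) = UNIV" and sets_law[simp]: "sets (normal_law \<theta>) = sets borel"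
  by (auto simp: normal_law_def)

lemma Psi0: "Psi 0 = 0"
  unfolding Psi_def zero_ereal_def by (rule interval_integral_endpoints_same)

lemma Psi_odd: "Psi (- u) = - Psi u"
proof -
  have d: "\<And>x. ((\<lambda>u. Psi u + Psi (-u)) has_real_derivative 0) (at x)"
  proof -
    fix x
    have "((\<lambda>u. Psi u + Psi (-u)) has_real_derivative
            std_normal_density x + std_normal_density (-x) * (-1)) (at x)"
      by (intro derivative_intros Psi_deriv DERIV_chain2[OF Psi_deriv])
    then show "((\<lambda>u. Psi u + Psi (-u)) has_real_derivative 0) (at x)"
      by (simp add: normal_density_def)
  qed
  have "Psi u + Psi (-u) = Psi 0 + Psi (-0)"
    using DERIV_isconst_all[of "\<lambda>u. Psi u + Psi (-u)" u 0] d by blast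
  then show ?thesis by (simp add: Psi0)
qed

definition G :: "real \<Rightarrow> real \<Rightarrow> real" where
  "G c \<theta> = Psi (c - \<theta>) - Psi (- c - \<theta>)"

lemma G_even: "G c (-\<theta>) = G c \<theta>"
proof -
  have "Psi (c + \<theta>) = - Psi (-c - \<theta>)" "Psi (-c + \<theta>) = - Psi (c - \<theta>)"
    using Psi_odd[of "c + \<theta>"] Psi_odd[of "-c + \<theta>"] by auto
  then show ?thesis by (simp add: G_def)
qed

lemma G_mono:
  assumes "c \<ge> 0" "0 \<le> \<theta>" "\<theta> \<le> \<theta>'"
  shows "G c \<theta>' \<le> G c \<theta>"
proof (rule DERIV_nonpos_imp_nonincreasing[OF assms(3)])
  fix x assume x: "\<theta> \<le> x" "x \<le> \<theta>'"
  have d: "(G c has_real_derivative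
      std_normal_density (c - x) * (-1) - std_normal_density (-c - x) * (-1)) (at x)"
    unfolding G_def[abs_def]
    by (intro derivative_intros DERIV_chain2[OF Psi_deriv]) (auto intro!: derivative_eq_intros)
  have "(c - x)\<^sup>2 \<le> (-c - x)\<^sup>2" using x assms by (simp add: power2_eq_square algebra_simps)
  then have "exp (- (-c - x)\<^sup>2 / 2) \<le> exp (- (c - x)\<^sup>2 / 2)"
    by simp
  then have "std_normal_density (-c - x) \<le> std_normal_density (c - x)"
    unfolding std_normal_density_def by (intro mult_left_mono) auto
  with d show "\<exists>y. (G c has_real_derivative y) (at x) \<and> y \<le> 0"
    by (intro exI[of _ "std_normal_density (c - x) * (-1) - std_normal_density (-c - x) * (-1)"]) auto
qed

lemma G_abs_mono:
  assumes "c \<ge> 0" "\<bar>\<theta>\<bar> \<le> \<bar>\<theta>'\<bar>"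
  shows "G c \<theta>' \<le> G c \<theta>"
proof -
  have "G c \<theta>' = G c \<bar>\<theta>'\<bar>" "G c \<theta> = G c \<bar>\<theta>\<bar>"
    by (metis G_even abs_of_neg abs_of_nonneg not_less)+
  moreover have "G c \<bar>\<theta>'\<bar> \<le> G c \<bar>\<theta>\<bar>"
    by (rule G_mono) (use assms in auto)
  ultimately show ?thesis by linarith
qed

lemma compl_mono:
  assumes "c \<ge> 0" "\<bar>\<theta>\<bar> \<le> \<bar>\<theta>'\<bar>"
  shows "measure (normal_law \<theta>') {y. c \<le> \<bar>y\<bar>} \<ge> measure (normal_law \<theta>) {y. c \<le> \<bar>y\<bar>}"
proof -
  have e: "{y. c \<le> \<bar>y\<bar>} = UNIV - {-c<..<c}" by auto
  have m: "measure (normal_law th) {y. c \<le> \<bar>y\<bar>} = 1 - G c th" for th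
  proof -
    interpret P: prob_space "normal_law th" by (rule prob_law)
    have "measure (normal_law th) {y. c \<le> \<bar>y\<bar>} = 1 - measure (normal_law th) {-c<..<c}"
      unfolding e using P.prob_compl[of "{-c<..<c}"] by simp
    also have "\<dots> = 1 - G c th" using measure_interval[of "-c" c th] assms by (simp add: G_def)
    finally show ?thesis .
  qed
  show ?thesis unfolding m using G_abs_mono[OF assms] by simp
qed

lemma E_sets: "{z::real. c \<le> \<bar>z\<bar>} \<in> sets borel"
proof -
  have "{z::real. c \<le> \<bar>z\<bar>} = UNIV - {-c<..<c}" by auto
  then show ?thesis by simp
qed

lemma nu_ge:
  assumes "a > 0"
  shows "a\<^sup>2 \<le> nu a"
proof -
  define E where "E = {z::real. a \<le> \<bar>z\<bar>}"
  have Es: "E \<in> sets borel" unfolding E_def by (rule E_sets)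
  interpret P: prob_space "normal_law 0" by (rule prob_law)
  define m where "m = measure (normal_law 0) E"
  have "Psi a < Psi (a + 1)"
    by (rule DERIV_pos_imp_increasing) (auto intro!: exI Psi_deriv normal_density_pos)
  then have "0 < measure (normal_law 0) {a<..<a+1}"
    using measure_interval[of a "a+1" 0] by simp
  also have "\<dots> \<le> m"
    unfolding m_def using Es by (intro P.finite_measure_mono) (auto simp: E_def)
  finally have mpos: "0 < m" .
  have N: "(\<integral>z. indicator E z * z\<^sup>2 \<partial>normal_law 0) =
        (LINT z|lborel. std_normal_density z * (indicator E z * z\<^sup>2))"
    unfolding normal_law_def using Es by (intro integral_real_density) auto
  have i1: "integrable lborel (\<lambda>z. std_normal_density z * (indicator E z * z\<^sup>2))"
  proof -
    have "integrable lborel (\<lambda>z. indicator E z * (std_normal_density z * z^2))"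
      using integrable_mult_indicator[OF _ integrable_std_normal_moment[of 2], of E] Es by simp
    then show ?thesis by (simp add: ac_simps)
  qed
  have i2: "integrable lborel (\<lambda>z. std_normal_density z * (indicator E z * a\<^sup>2))"
  proof -
    have "integrable lborel (\<lambda>z. indicator E z * (std_normal_density z * a^2))"
    proof -
      have "integrable lborel (\<lambda>z. std_normal_density z * a^2)" by simp
      then show ?thesis using integrable_mult_indicator[of E lborel "\<lambda>z. std_normal_density z * a^2"] Es
        by simp
    qed
    then show ?thesis by (simp add: ac_simps)
  qed
  have "(LINT z|lborel. std_normal_density z * (indicator E z * a\<^sup>2))
      \<le> (LINT z|lborel. std_normal_density z * (indicator E z * z\<^sup>2))"
  proof (rule integral_mono[OF i2 i1])
    fix z
    have "indicator E z * a\<^sup>2 \<le> indicator E z * z\<^sup>2"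
    proof (cases "z \<in> E")
      case True
      then have "a \<le> \<bar>z\<bar>" by (simp add: E_def)
      then have "a\<^sup>2 \<le> \<bar>z\<bar>\<^sup>2" using assms by (intro power_mono) auto
      then show ?thesis using True by simp
    qed simp
    then show "std_normal_density z * (indicator E z * a\<^sup>2) \<le> std_normal_density z * (indicator E z * z\<^sup>2)"
      by (rule mult_left_mono) auto
  qed
  moreover have "(LINT z|lborel. std_normal_density z * (indicator E z * a\<^sup>2)) = a\<^sup>2 * m"
  proof -
    have "(LINT z|lborel. std_normal_density z * (indicator E z * a\<^sup>2)) =
          (LINT z|lborel. std_normal_density z * indicator E z) * a\<^sup>2"
      by (subst integral_mult_left_zero[symmetric]) (simp add: ac_simps)
    also have "\<dots> = m * a\<^sup>2" unfolding m_def using measure_law[OF Es, of 0] by simp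
    finally show ?thesis by simp
  qed
  ultimately have "a\<^sup>2 * m \<le> (\<integral>z. indicator E z * z\<^sup>2 \<partial>normal_law 0)"
    using N by simp
  then show ?thesis unfolding nu_def E_def[symmetric] m_def[symmetric]
    using mpos by (simp add: pos_le_divide_eq)
qed

theorem lemma8:
  fixes a \<theta> \<theta>' t :: real
  assumes "a > 0" and "\<bar>\<theta>\<bar> \<le> \<bar>\<theta>'\<bar>"
  shows "measure (normal_law \<theta>') {y. A_stat a y - B_stat y \<le> t}
           \<ge> measure (normal_law \<theta>) {y. A_stat a y - B_stat y \<le> t}"
proof -
  have key: "A_stat a y - B_stat y = (if a \<le> \<bar>y\<bar> then 1 - nu a else 1 - y\<^sup>2)" for y
    by (simp add: A_stat_def B_stat_def indicator_def)
  have nu: "a\<^sup>2 \<le> nu a" using nu_ge[OF assms(1)] .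
  show ?thesis
  proof (cases "t < 1 - nu a")
    case True
    have "{y. A_stat a y - B_stat y \<le> t} = {}"
    proof (rule ccontr)
      assume "{y. A_stat a y - B_stat y \<le> t} \<noteq> {}"
      then obtain y where y: "A_stat a y - B_stat y \<le> t" by auto
      show False
      proof (cases "a \<le> \<bar>y\<bar>")
        case True
        then show False using y key[of y] \<open>t < 1 - nu a\<close> by simp
      next
        case False
        then have "\<bar>y\<bar>\<^sup>2 < a\<^sup>2" by (intro power_strict_mono) auto
        then have "y\<^sup>2 < a\<^sup>2" by simp
        then show False using y key[of y] False \<open>t < 1 - nu a\<close> nu by simp
      qed
    qed
    then show ?thesis by simp
  next
    case False
    show ?thesis
    proof (cases "1 - t \<le> 0")
      case True
      have "{y. A_stat a y - B_stat y \<le> t} = UNIV"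
        using key False True by (auto simp: zero_le_power2 intro: order_trans[of _ 1])
      moreover have "measure (normal_law th) UNIV = 1" for th
      proof -
        interpret P: prob_space "normal_law th" by (rule prob_law)
        show ?thesis using P.prob_space by simp
      qed
      ultimately show ?thesis by simp
    next
      case True2: False
      define c where "c = min a (sqrt (1 - t))"
      have c0: "0 \<le> c" unfolding c_def using assms(1) True2 by auto
      have sq: "sqrt (1 - t) \<le> \<bar>y\<bar> \<longleftrightarrow> 1 - t \<le> y\<^sup>2" for y
      proof -
        have "sqrt (1 - t) \<le> \<bar>y\<bar> \<longleftrightarrow> sqrt (1 - t) \<le> sqrt (y\<^sup>2)" by simp
        also have "\<dots> \<longleftrightarrow> 1 - t \<le> y\<^sup>2" by (rule real_sqrt_le_iff)
        finally show ?thesis .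
      qed
      have "{y. A_stat a y - B_stat y \<le> t} = {y. c \<le> \<bar>y\<bar>}"
        unfolding c_def using key False sq by (auto simp: min_le_iff_disj)
      then show ?thesis using compl_mono[OF c0 assms(2)] by simp
    qed
  qed
qed

end
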